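(* Let $G$ be a very well-covered graph with $V(G)=\{x_1,\ldots,x_h,y_1,\ldots,y_h\}$ such that $\{x_1,\ldots,x_h\}$ is a minimal vertex cover, $\{y_1,\ldots,y_h\}$ a maximal independent set and $\{x_i,y_i\}\in E(G)$ for all $i$. Let $s\ge1$, $e_1,\ldots,e_s\in E(G)$, and let $G'$ be the graph associated to $(I(G)^{s+1}:e_1\cdots e_s)$ as in the context. Let $y\in V(G)$ and $H=G\setminus N_G[y]$. If $\{e_1,\ldots,e_s\}\cap E(H)=\{e_{i_1},\ldots,e_{i_t}\}$ and $H'$ is the graph associated (in the same way) to $(I(H)^{t+1}:e_{i_1}\cdots e_{i_t})$, then $G'\setminus N_{G'}[y]$ is an induced subgraph of $H'$. In particular $\operatorname{reg}(I(G'\setminus N_{G'}[y]))\le\operatorname{reg}(I(H'))$.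
   Context: $N_G[y]$ is the closed neighbourhood of $y$; for $U\subseteq V(G)$, $G\setminus U$ is the induced subgraph on $V(G)\setminus U$. $I(\cdot)$ is the edge ideal; edges are identified with the products of their endpoints; $\operatorname{reg}$ is Castelnuovo–Mumford regularity. $G$ is very well-covered if it has no isolated vertices, all minimal vertex covers have the same size, and this size is $|V(G)|/2$. Even-connection: a sequence $p_0p_1\cdots p_{2k+1}$, $k\ge1$, with $\{p_r,p_{r+1}\}\in E(G)$ for all $r$, each $\{p_{2\ell+1},p_{2\ell+2}\}$ ($0\le\ell\le k-1$) equal to some $e_m$, each edge used among these at most as many times as it appears in $e_1,\dots,e_s$; then $p_0,p_{2k+1}$ (possibly equal) are even-connected. $(I(G)^{s+1}:e_1\cdots e_s)$ is minimally generated by $uv$ with $\{u,v\}\in E(G)$ or $u,v$ even-connected; the graph associated to it is the graph whose edge ideal is the polarization of this ideal (each generator $u^2$ replaced by $uu^*$ with a new vertex $u^*$). *)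

theory Defs
  imports "HOL-Library.Multiset"
begin

definition graph :: "'a set \<Rightarrow> 'a set set \<Rightarrow> bool" where
  "graph V E \<longleftrightarrow> finite V \<and> (\<forall>e\<in>E. \<exists>a b. a \<noteq> b \<and> e = {a, b} \<and> a \<in> V \<and> b \<in> V)"

definition vertex_cover :: "'a set \<Rightarrow> 'a set set \<Rightarrow> 'a set \<Rightarrow> bool" where
  "vertex_cover V E C \<longleftrightarrow> C \<subseteq> V \<and> (\<forall>e\<in>E. e \<inter> C \<noteq> {})"

definition min_vertex_cover :: "'a set \<Rightarrow> 'a set set \<Rightarrow> 'a set \<Rightarrow> bool" where
  "min_vertex_cover V E C \<longleftrightarrow> vertex_cover V E C \<and> (\<forall>D. D \<subset> C \<longrightarrow> \<not> vertex_cover V E D)"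

definition indep_set :: "'a set \<Rightarrow> 'a set set \<Rightarrow> 'a set \<Rightarrow> bool" where
  "indep_set V E I \<longleftrightarrow> I \<subseteq> V \<and> (\<forall>e\<in>E. \<not> e \<subseteq> I)"

definition max_indep_set :: "'a set \<Rightarrow> 'a set set \<Rightarrow> 'a set \<Rightarrow> bool" where
  "max_indep_set V E I \<longleftrightarrow> indep_set V E I \<and> (\<forall>J. I \<subset> J \<longrightarrow> \<not> indep_set V E J)"

definition very_well_covered :: "'a set \<Rightarrow> 'a set set \<Rightarrow> bool" where
  "very_well_covered V E \<longleftrightarrow> (\<forall>v\<in>V. \<exists>e\<in>E. v \<in> e)
     \<and> (\<forall>C. min_vertex_cover V E C \<longrightarrow> 2 * card C = card V)"

definition cnbhd :: "'a set set \<Rightarrow> 'a \<Rightarrow> 'a set" where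
  "cnbhd E y = insert y {v. {y, v} \<in> E}"

definition del_V :: "'a set \<Rightarrow> 'a set \<Rightarrow> 'a set" where
  "del_V V U = V - U"

definition del_E :: "'a set \<Rightarrow> 'a set set \<Rightarrow> 'a set \<Rightarrow> 'a set set" where
  "del_E V E U = {e \<in> E. e \<subseteq> V - U}"

definition even_connected :: "'a set set \<Rightarrow> 'a set list \<Rightarrow> 'a \<Rightarrow> 'a \<Rightarrow> bool" where
  "even_connected E es u v \<longleftrightarrow>
     (\<exists>k::nat. \<exists>p::nat \<Rightarrow> 'a. k \<ge> 1 \<and> p 0 = u \<and> p (2*k+1) = v
        \<and> (\<forall>r < 2*k+1. {p r, p (Suc r)} \<in> E)
        \<and> (\<forall>l < k. {p (2*l+1), p (2*l+2)} \<in> set es)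
        \<and> (\<forall>e. card {l. l < k \<and> {p (2*l+1), p (2*l+2)} = e} \<le> count (mset es) e))"

text \<open>Graph associated to (I(G)^(s+1) : e_1...e_s), es = [e_1,...,e_s]:
  original vertices Inl v, new polarization vertices Inr u (= u^*).\<close>
definition assoc_V :: "'a set \<Rightarrow> 'a set set \<Rightarrow> 'a set list \<Rightarrow> ('a + 'a) set" where
  "assoc_V V E es = Inl ` V \<union> {Inr u | u. u \<in> V \<and> even_connected E es u u}"

definition assoc_E :: "'a set \<Rightarrow> 'a set set \<Rightarrow> 'a set list \<Rightarrow> ('a + 'a) set set" where
  "assoc_E V E es =
     {{Inl u, Inl v} | u v. {u, v} \<in> E \<or> (u \<noteq> v \<and> even_connected E es u v)}
     \<union> {{Inl u, Inr u} | u. even_connected E es u u}"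

definition induced_subgraph :: "'b set \<Rightarrow> 'b set set \<Rightarrow> 'b set \<Rightarrow> 'b set set \<Rightarrow> bool" where
  "induced_subgraph V1 E1 V2 E2 \<longleftrightarrow> V1 \<subseteq> V2 \<and> E1 = {e \<in> E2. e \<subseteq> V1}"

end

theory Submission
  imports Defs
begin

definition ecp :: "'a set set \<Rightarrow> 'a set list \<Rightarrow> nat \<Rightarrow> (nat \<Rightarrow> 'a) \<Rightarrow> bool" where
  "ecp E es k p \<longleftrightarrow> k \<ge> 1 \<and> (\<forall>r < 2*k+1. {p r, p (Suc r)} \<in> E)
        \<and> (\<forall>l < k. {p (2*l+1), p (2*l+2)} \<in> set es)
        \<and> (\<forall>e. card {l. l < k \<and> {p (2*l+1), p (2*l+2)} = e} \<le> count (mset es) e)"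

lemma ec_iff: "even_connected E es u v \<longleftrightarrow> (\<exists>k p. ecp E es k p \<and> p 0 = u \<and> p (2*k+1) = v)"
  unfolding even_connected_def ecp_def by blast

lemma ecp_prefix:
  assumes "ecp E es k p" "1 \<le> m" "m \<le> k" "{p (2*m), z} \<in> E"
  shows "even_connected E es (p 0) z"
proof -
  define q where "q = p(2*m+1 := z)"
  have "ecp E es m q"
    unfolding ecp_def
  proof (intro conjI allI impI)
    show "1 \<le> m" by fact
  next
    fix r assume r: "r < 2*m+1"
    show "{q r, q (Suc r)} \<in> E"
    proof (cases "r = 2*m")
      case True then show ?thesis using assms(4) by (simp add: q_def)
    next
      case False then have "r < 2*m" using r by simp
      then show ?thesis using assms(1) assms(3) by (simp add: q_def ecp_def)
    qed
  next
    fix l assume "l < m"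
    then show "{q (2*l+1), q (2*l+2)} \<in> set es" using assms(1,3) by (auto simp: q_def ecp_def)
  next
    fix e
    have "{l. l < m \<and> {q (2*l+1), q (2*l+2)} = e} \<subseteq> {l. l < k \<and> {p (2*l+1), p (2*l+2)} = e}"
      using assms(3) by (auto simp: q_def)
    then have "card {l. l < m \<and> {q (2*l+1), q (2*l+2)} = e} \<le> card {l. l < k \<and> {p (2*l+1), p (2*l+2)} = e}"
      by (rule card_mono[rotated]) simp
    also have "\<dots> \<le> count (mset es) e" using assms(1) by (simp add: ecp_def)
    finally show "card {l. l < m \<and> {q (2*l+1), q (2*l+2)} = e} \<le> count (mset es) e" .
  qed
  moreover have "q 0 = p 0" "q (2*m+1) = z" by (auto simp: q_def)
  ultimately show ?thesis unfolding ec_iff by blast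
qed

lemma ecp_rev:
  assumes "ecp E es k p"
  shows "ecp E es k (\<lambda>r. p (2*k+1-r))"
  unfolding ecp_def
proof (intro conjI allI impI)
  show "1 \<le> k" using assms by (simp add: ecp_def)
next
  fix r assume r: "r < 2*k+1"
  define r' where "r' = 2*k - r"
  have "r' < 2*k+1" "2*k+1-r = Suc r'" "2*k+1 - Suc r = r'" using r by (auto simp: r'_def)
  then show "{p (2*k+1-r), p (2*k+1-Suc r)} \<in> E"
    using assms by (auto simp: ecp_def insert_commute)
next
  fix l assume l: "l < k"
  have a: "2*k+1-(2*l+1) = 2*(k-1-l)+2" "2*k+1-(2*l+2) = 2*(k-1-l)+1" using l by auto
  show "{p (2*k+1-(2*l+1)), p (2*k+1-(2*l+2))} \<in> set es"
    unfolding a using assms l by (auto simp: ecp_def insert_commute)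
next
  fix e
  have "{l. l < k \<and> {p (2*k+1-(2*l+1)), p (2*k+1-(2*l+2))} = e}
     \<subseteq> (\<lambda>l. k-1-l) ` {l. l < k \<and> {p (2*l+1), p (2*l+2)} = e}"
  proof
    fix l assume "l \<in> {l. l < k \<and> {p (2*k+1-(2*l+1)), p (2*k+1-(2*l+2))} = e}"
    then have l: "l < k" and el: "{p (2*k+1-(2*l+1)), p (2*k+1-(2*l+2))} = e" by auto
    have a: "2*k+1-(2*l+1) = 2*(k-1-l)+2" "2*k+1-(2*l+2) = 2*(k-1-l)+1" using l by auto
    have "l = k-1-(k-1-l)" using l by auto
    moreover have "k-1-l \<in> {l. l < k \<and> {p (2*l+1), p (2*l+2)} = e}"
      using l el unfolding a by (auto simp: insert_commute)
    ultimately show "l \<in> (\<lambda>l. k-1-l) ` {l. l < k \<and> {p (2*l+1), p (2*l+2)} = e}" by blast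
  qed
  then have "card {l. l < k \<and> {p (2*k+1-(2*l+1)), p (2*k+1-(2*l+2))} = e}
     \<le> card ((\<lambda>l. k-1-l) ` {l. l < k \<and> {p (2*l+1), p (2*l+2)} = e})"
    by (rule card_mono[rotated]) simp
  also have "\<dots> \<le> card {l. l < k \<and> {p (2*l+1), p (2*l+2)} = e}" by (rule card_image_le) simp
  also have "\<dots> \<le> count (mset es) e" using assms by (simp add: ecp_def)
  finally show "card {l. l < k \<and> {p (2*k+1-(2*l+1)), p (2*k+1-(2*l+2))} = e} \<le> count (mset es) e" .
qed

lemma touch1:
  assumes "ecp E es k p" "j \<le> 2*k+1"
    and "(odd j \<and> p j = w) \<or> (even j \<and> {w, p j} \<in> E)"
  shows "p 0 \<in> cnbhd E w \<or> even_connected E es (p 0) w"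
  using assms(3)
proof
  assume a: "odd j \<and> p j = w"
  then obtain l where j: "j = 2*l+1" by (meson oddE)
  show ?thesis
  proof (cases "l = 0")
    case True
    then have "{p 0, p 1} \<in> E" using assms(1) by (auto simp: ecp_def)
    then show ?thesis using a j True by (auto simp: cnbhd_def insert_commute)
  next
    case False
    have "{p (2*l), p (Suc (2*l))} \<in> E" using assms(1,2) j by (auto simp: ecp_def)
    then have "{p (2*l), w} \<in> E" using a j by simp
    then show ?thesis using ecp_prefix[OF assms(1), of l w] False assms(2) j by auto
  qed
next
  assume a: "even j \<and> {w, p j} \<in> E"
  then obtain m where j: "j = 2*m" by (meson evenE)
  show ?thesis
  proof (cases "m = 0")
    case True
    then show ?thesis using a j by (auto simp: cnbhd_def)
  next
    case False
    have "{p (2*m), w} \<in> E" using a j by (simp add: insert_commute)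
    then show ?thesis using ecp_prefix[OF assms(1), of m w] False assms(2) j by auto
  qed
qed

lemma touch2:
  assumes "ecp E es k p" "j \<le> 2*k+1" "p j \<in> cnbhd E w"
  shows "(p 0 \<in> cnbhd E w \<or> even_connected E es (p 0) w)
       \<or> (p (2*k+1) \<in> cnbhd E w \<or> even_connected E es (p (2*k+1)) w)"
proof (cases "(odd j \<and> p j = w) \<or> (even j \<and> {w, p j} \<in> E)")
  case True
  then show ?thesis using touch1[OF assms(1,2)] by blast
next
  case False
  define j' where "j' = 2*k+1-j"
  have pj: "p j = w \<or> {w, p j} \<in> E" using assms(3) by (auto simp: cnbhd_def)
  have j': "j' \<le> 2*k+1" "2*k+1-j' = j" using assms(2) by (auto simp: j'_def)
  have par: "odd j' \<longleftrightarrow> even j" using assms(2) unfolding j'_def by auto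
  have "(odd j' \<and> p (2*k+1-j') = w) \<or> (even j' \<and> {w, p (2*k+1-j')} \<in> E)"
    using False pj par j' by auto
  from touch1[OF ecp_rev[OF assms(1)] j'(1), of w] this
  show ?thesis by simp
qed

lemma ecp_mono:
  assumes "ecp E1 es1 k p" "E1 \<subseteq> E" "set es1 \<subseteq> set es"
    "\<And>e. count (mset es1) e \<le> count (mset es) e"
  shows "ecp E es k p"
  using assms unfolding ecp_def by (meson le_trans subsetD)

lemma ecp_ends:
  assumes "ecp E es k p"
  shows "p 0 \<in> \<Union>E" "p (2*k+1) \<in> \<Union>E"
proof -
  have "{p 0, p (Suc 0)} \<in> E" "{p (2*k), p (Suc (2*k))} \<in> E" using assms by (auto simp: ecp_def)
  then show "p 0 \<in> \<Union>E" "p (2*k+1) \<in> \<Union>E" by auto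
qed

lemma ecp_restrict:
  assumes "ecp E es k p" "\<And>r. r \<le> 2*k+1 \<Longrightarrow> p r \<notin> N" "\<And>e. e \<in> E \<Longrightarrow> e \<subseteq> V"
  shows "ecp {e \<in> E. e \<subseteq> V - N} (filter (\<lambda>e. e \<in> {e \<in> E. e \<subseteq> V - N}) es) k p"
proof -
  let ?EH = "{e \<in> E. e \<subseteq> V - N}"
  have edge: "{p r, p (Suc r)} \<in> ?EH" if "r < 2*k+1" for r
  proof -
    have e: "{p r, p (Suc r)} \<in> E" using assms(1) that by (simp add: ecp_def)
    then have "{p r, p (Suc r)} \<subseteq> V" by (rule assms(3))
    moreover have "p r \<notin> N" "p (Suc r) \<notin> N" using assms(2) that by auto
    ultimately have "{p r, p (Suc r)} \<subseteq> V - N" by blast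
    with e show ?thesis by blast
  qed
  have pair: "{p (2*l+1), p (2*l+2)} \<in> ?EH" if "l < k" for l
  proof -
    have "2*l+1 < 2*k+1" using that by simp
    from edge[OF this] show ?thesis by (simp add: numeral_2_eq_2)
  qed
  have c: "\<forall>e. card {l. l < k \<and> {p (2*l+1), p (2*l+2)} = e} \<le> count (mset es) e"
    using assms(1) unfolding ecp_def by blast
  have ses: "\<forall>l < k. {p (2*l+1), p (2*l+2)} \<in> set es"
    using assms(1) unfolding ecp_def by blast
  show ?thesis
    unfolding ecp_def
  proof (intro conjI allI impI)
    show "1 \<le> k" using assms(1) by (simp add: ecp_def)
  next
    fix r assume "r < 2*k+1" then show "{p r, p (Suc r)} \<in> ?EH" by (rule edge)
  next
    fix l assume l: "l < k"
    have "{p (2*l+1), p (2*l+2)} \<in> set es" using ses l by blast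
    moreover have "{p (2*l+1), p (2*l+2)} \<in> ?EH" using pair l by blast
    ultimately show "{p (2*l+1), p (2*l+2)} \<in> set (filter (\<lambda>e. e \<in> ?EH) es)"
      unfolding set_filter by blast
  next
    fix e
    show "card {l. l < k \<and> {p (2*l+1), p (2*l+2)} = e} \<le> count (mset (filter (\<lambda>e. e \<in> ?EH) es)) e"
    proof (cases "e \<in> ?EH")
      case True
      have eq: "count (mset (filter (\<lambda>e. e \<in> ?EH) es)) e = count (mset es) e"
        unfolding mset_filter count_filter_mset by (rule if_P[OF True])
      show ?thesis unfolding eq by (rule c[rule_format])
    next
      case False
      have emp: "{l. l < k \<and> {p (2*l+1), p (2*l+2)} = e} = {}"
      proof (rule ccontr)
        assume "{l. l < k \<and> {p (2*l+1), p (2*l+2)} = e} \<noteq> {}"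
        then obtain l where "l < k" "{p (2*l+1), p (2*l+2)} = e" by blast
        then show False using pair False by blast
      qed
      show ?thesis unfolding emp card.empty by (rule le0)
    qed
  qed
qed

lemma assocE_I1:
  assumes "{u, v} \<in> E \<or> (u \<noteq> v \<and> even_connected E es u v)"
  shows "{Inl u, Inl v} \<in> assoc_E V E es"
proof -
  have "{Inl u, Inl v} \<in> {{Inl u, Inl v} | u v. {u, v} \<in> E \<or> (u \<noteq> v \<and> even_connected E es u v)}"
    by (rule CollectI, rule exI[where x=u], rule exI[where x=v]) (simp add: assms)
  then show ?thesis unfolding assoc_E_def by (rule UnI1)
qed

lemma assocE_I2:
  assumes "even_connected E es u u"
  shows "{Inl u, Inr u} \<in> assoc_E V E es"
proof -
  have "{Inl u, Inr u} \<in> {{Inl u, Inr u} | u. even_connected E es u u}"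
    by (rule CollectI, rule exI[where x=u]) (simp add: assms)
  then show ?thesis unfolding assoc_E_def by (rule UnI2)
qed

lemma assocE_cases:
  assumes "e \<in> assoc_E V E es"
  obtains (a) u v where "e = {Inl u, Inl v}" "{u, v} \<in> E \<or> (u \<noteq> v \<and> even_connected E es u v)"
    | (b) u where "e = {Inl u, Inr u}" "even_connected E es u u"
proof -
  from assms have "e \<in> {{Inl u, Inl v} | u v. {u, v} \<in> E \<or> (u \<noteq> v \<and> even_connected E es u v)}
     \<or> e \<in> {{Inl u, Inr u} | u. even_connected E es u u}"
    unfolding assoc_E_def by (rule UnE) simp_all
  then show ?thesis
  proof
    assume "e \<in> {{Inl u, Inl v} | u v. {u, v} \<in> E \<or> (u \<noteq> v \<and> even_connected E es u v)}"
    then obtain u v where "e = {Inl u, Inl v}" "{u, v} \<in> E \<or> (u \<noteq> v \<and> even_connected E es u v)"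
      unfolding mem_Collect_eq by (elim exE conjE)
    then show ?thesis by (rule that(1))
  next
    assume "e \<in> {{Inl u, Inr u} | u. even_connected E es u u}"
    then obtain u where "e = {Inl u, Inr u}" "even_connected E es u u"
      unfolding mem_Collect_eq by (elim exE conjE)
    then show ?thesis by (rule that(2))
  qed
qed

lemma assocV_I1: "u \<in> V \<Longrightarrow> Inl u \<in> assoc_V V E es"
  unfolding assoc_V_def by (rule UnI1) (rule imageI)

lemma assocV_I2: "u \<in> V \<Longrightarrow> even_connected E es u u \<Longrightarrow> Inr u \<in> assoc_V V E es"
  unfolding assoc_V_def by (rule UnI2) simp

lemma assocE_sub:
  assumes "\<And>u v. even_connected E es u v \<Longrightarrow> u \<in> V \<and> v \<in> V"
    and "\<And>e. e \<in> E \<Longrightarrow> e \<subseteq> V"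
    and "e \<in> assoc_E V E es"
  shows "e \<subseteq> assoc_V V E es"
  using assms(3)
proof (cases rule: assocE_cases)
  case (a u v)
  have uv: "u \<in> V \<and> v \<in> V"
  proof (cases "{u, v} \<in> E")
    case True then show ?thesis using assms(2)[OF True] by simp
  next
    case False then have "even_connected E es u v" using a(2) by simp
    then show ?thesis by (rule assms(1))
  qed
  then show ?thesis unfolding a(1) by (simp add: assocV_I1)
next
  case (b u)
  have "u \<in> V" using assms(1)[OF b(2)] by blast
  then show ?thesis unfolding b(1) by (simp add: assocV_I1 assocV_I2 b(2))
qed

theorem lemma4p5:
  fixes V :: "'a set" and E :: "'a set set" and x y :: "nat \<Rightarrow> 'a"
    and h s :: nat and es :: "'a set list" and w :: 'a
  assumes "graph V E" and "very_well_covered V E"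
    and "V = x ` {1..h} \<union> y ` {1..h}"
    and "inj_on x {1..h}" and "inj_on y {1..h}" and "x ` {1..h} \<inter> y ` {1..h} = {}"
    and "min_vertex_cover V E (x ` {1..h})"
    and "max_indep_set V E (y ` {1..h})"
    and "\<forall>i\<in>{1..h}. {x i, y i} \<in> E"
    and "s \<ge> 1" and "length es = s" and "set es \<subseteq> E"
    and "w \<in> V"
  shows "let VH = del_V V (cnbhd E w);
             EH = del_E V E (cnbhd E w);
             esH = filter (\<lambda>e. e \<in> EH) es;
             V' = assoc_V V E es;
             E' = assoc_E V E es;
             E2 = del_E V' E' (cnbhd E' (Inl w))
         in induced_subgraph (\<Union> E2) E2 (assoc_V VH EH esH) (assoc_E VH EH esH)"
proof -
  define N where "N = cnbhd E w"
  define VH where "VH = V - N"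
  define EH where "EH = {e \<in> E. e \<subseteq> V - N}"
  define esH where "esH = filter (\<lambda>e. e \<in> EH) es"
  define V' where "V' = assoc_V V E es"
  define E' where "E' = assoc_E V E es"
  define N' where "N' = cnbhd E' (Inl w)"
  define E2 where "E2 = {e \<in> E'. e \<subseteq> V' - N'}"
  have EV: "e \<subseteq> V" if "e \<in> E" for e
  proof -
    from assms(1) that obtain a b where "e = {a, b}" "a \<in> V" "b \<in> V"
      unfolding graph_def by metis
    then show ?thesis by simp
  qed
  have N'eq: "N' = insert (Inl w) {a. {Inl w, a} \<in> E'}" by (simp add: N'_def cnbhd_def)
  have Neq: "N = insert w {a. {w, a} \<in> E}" by (simp add: N_def cnbhd_def)
  have L0: "u \<notin> N \<and> \<not> even_connected E es u w" if nu: "Inl u \<notin> N'" for u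
  proof -
    have "Inl u \<noteq> Inl w" using nu unfolding N'eq by (rule contrapos_nn) simp
    then have uw: "u \<noteq> w" by simp
    have "{w, u} \<notin> E"
    proof
      assume "{w, u} \<in> E"
      then have "{Inl w, Inl u} \<in> E'" unfolding E'_def by (intro assocE_I1) (rule disjI1)
      then have "Inl u \<in> N'" unfolding N'eq by simp
      then show False using nu by contradiction
    qed
    moreover have "\<not> even_connected E es u w"
    proof
      assume "even_connected E es u w"
      then have "{Inl u, Inl w} \<in> E'" using uw unfolding E'_def by (intro assocE_I1) simp
      then have "{Inl w, Inl u} \<in> E'" by (simp add: insert_commute)
      then have "Inl u \<in> N'" unfolding N'eq by simp
      then show False using nu by contradiction
    qed
    ultimately show ?thesis using uw unfolding Neq by simp
  qed
  have nec: "even_connected EH esH u v"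
    if ec: "even_connected E es u v" and nu: "u \<notin> N" "\<not> even_connected E es u w"
       and nv: "v \<notin> N" "\<not> even_connected E es v w" for u v
  proof -
    obtain k p where kp: "ecp E es k p" "p 0 = u" "p (2*k+1) = v"
      using ec unfolding ec_iff by blast
    have nr: "p r \<notin> N" if r: "r \<le> 2*k+1" for r
    proof
      assume "p r \<in> N"
      then have "p r \<in> cnbhd E w" by (simp add: N_def)
      from touch2[OF kp(1) r this]
      have "(u \<in> N \<or> even_connected E es u w) \<or> (v \<in> N \<or> even_connected E es v w)"
        using kp(2,3) by (simp add: N_def)
      then show False using nu nv by blast
    qed
    from ecp_restrict[OF kp(1) nr EV] have "ecp EH esH k p"
      unfolding EH_def esH_def by blast
    then show ?thesis using kp unfolding ec_iff by blast
  qed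
  have ecback: "even_connected E es u v" if ecH: "even_connected EH esH u v" for u v
  proof -
    obtain k p where kp: "ecp EH esH k p" "p 0 = u" "p (2*k+1) = v"
      using ecH unfolding ec_iff by blast
    have "ecp E es k p"
    proof (rule ecp_mono[OF kp(1)])
      show "EH \<subseteq> E" unfolding EH_def by blast
      show "set esH \<subseteq> set es" unfolding esH_def by simp
      fix e show "count (mset esH) e \<le> count (mset es) e"
        unfolding esH_def mset_filter count_filter_mset by simp
    qed
    then show ?thesis using kp unfolding ec_iff by blast
  qed
  have UEH: "\<Union>EH \<subseteq> VH" unfolding EH_def VH_def by blast
  have ecH_V: "u \<in> VH \<and> v \<in> VH" if ecH: "even_connected EH esH u v" for u v
  proof -
    obtain k p where kp: "ecp EH esH k p" "p 0 = u" "p (2*k+1) = v"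
      using ecH unfolding ec_iff by blast
    then show ?thesis using ecp_ends[OF kp(1)] UEH by auto
  qed
  have EHsub: "e \<subseteq> assoc_V VH EH esH" if "e \<in> assoc_E VH EH esH" for e
  proof (rule assocE_sub[OF ecH_V _ that])
    fix e assume "e \<in> EH" then show "e \<subseteq> VH" using UEH by blast
  qed
  have key: "e \<in> assoc_E VH EH esH" if "e \<in> E2" for e
  proof -
    have eE: "e \<in> E'" and eV: "e \<subseteq> V' - N'" using that by (auto simp: E2_def)
    from eE[unfolded E'_def] show ?thesis
    proof (cases rule: assocE_cases)
      case (a u v)
      have "Inl u \<notin> N'" "Inl v \<notin> N'" using eV a(1) by auto
      then have u: "u \<notin> N" "\<not> even_connected E es u w" and v: "v \<notin> N" "\<not> even_connected E es v w"
        using L0 by auto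
      from a(2) show ?thesis
      proof
        assume uv: "{u, v} \<in> E"
        then have "{u, v} \<subseteq> V" by (rule EV)
        then have "{u, v} \<in> EH" using u v uv unfolding EH_def by blast
        then show ?thesis unfolding a(1) by (intro assocE_I1) blast
      next
        assume uv: "u \<noteq> v \<and> even_connected E es u v"
        then have "even_connected EH esH u v" using nec u v by blast
        then show ?thesis unfolding a(1) using uv by (intro assocE_I1) blast
      qed
    next
      case (b u)
      have "Inl u \<notin> N'" using eV b(1) by auto
      then have u: "u \<notin> N" "\<not> even_connected E es u w" using L0 by auto
      then have "even_connected EH esH u u" using nec b(2) by blast
      then show ?thesis unfolding b(1) by (rule assocE_I2)
    qed
  qed
  have E2sub: "\<Union>E2 \<subseteq> V' - N'" unfolding E2_def by blast
  have conv: "e \<in> E2" if e1: "e \<in> assoc_E VH EH esH" and e2: "e \<subseteq> \<Union>E2" for e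
  proof -
    have "e \<in> E'"
      using e1
    proof (cases rule: assocE_cases)
      case (a u v)
      have "{u, v} \<in> E \<or> (u \<noteq> v \<and> even_connected E es u v)"
        using a(2) ecback unfolding EH_def by blast
      then show ?thesis unfolding a(1) E'_def by (rule assocE_I1)
    next
      case (b u)
      then show ?thesis unfolding E'_def using ecback by (simp add: assocE_I2)
    qed
    moreover have "e \<subseteq> V' - N'" using e2 E2sub by blast
    ultimately show ?thesis unfolding E2_def by blast
  qed
  have res: "induced_subgraph (\<Union> E2) E2 (assoc_V VH EH esH) (assoc_E VH EH esH)"
    unfolding induced_subgraph_def
  proof
    show "\<Union>E2 \<subseteq> assoc_V VH EH esH" using key EHsub by blast
    show "E2 = {e \<in> assoc_E VH EH esH. e \<subseteq> \<Union>E2}" using key conv by blast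
  qed
  show ?thesis
    unfolding Let_def del_V_def del_E_def N_def[symmetric]
    unfolding EH_def[symmetric]
    unfolding VH_def[symmetric] esH_def[symmetric] V'_def[symmetric] E'_def[symmetric]
    unfolding N'_def[symmetric]
    unfolding E2_def[symmetric]
    by (rule res)
qed

end
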